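(* Assume $\mathrm{char}(K)\neq2,3,5$. Let $\phi$ be a $5\times5$ alternating matrix of linear forms in $x_1,\dots,x_5$ with $4\times4$ Pfaffians $p_1,\dots,p_5$. If $S(\phi)\neq0$ then the fifteen quartics $\{p_ip_j:1\le i\le j\le5\}$ are linearly independent.
   Context: $p_i=(-1)^{i+1}\mathrm{pf}(\phi^{\{i\}})$, where $\phi^{\{i\}}$ is obtained from $\phi$ by deleting the $i$th row and column. $S(\phi)=\det(\partial p_i/\partial x_j)_{i,j=1,\dots,5}$, a quintic form in $x_1,\dots,x_5$. *)

theory Defs
  imports "HOL-Library.Poly_Mapping" "HOL-Combinatorics.Permutations"
begin

text \<open>Multivariate polynomials over a coefficient type 'k in the variables x_1, x_2, ...
  (variable x_i is indexed by the natural number i); a monomial is a finitely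
  supported exponent vector.\<close>
type_synonym 'k mpoly = "(nat \<Rightarrow>\<^sub>0 nat) \<Rightarrow>\<^sub>0 'k"

definition Var :: "nat \<Rightarrow> 'k::{zero,one} mpoly" where
  "Var i = Poly_Mapping.single (Poly_Mapping.single i 1) 1"

definition Const :: "'k::zero \<Rightarrow> 'k mpoly" where
  "Const c = Poly_Mapping.single 0 c"

definition is_linear_form5 :: "'k::comm_ring_1 mpoly \<Rightarrow> bool" where
  "is_linear_form5 p \<longleftrightarrow> (\<exists>c :: nat \<Rightarrow> 'k. p = (\<Sum>k=1..5. Const (c k) * Var k))"

definition alt_linear_matrix5 :: "(nat \<Rightarrow> nat \<Rightarrow> 'k::comm_ring_1 mpoly) \<Rightarrow> bool" where
  "alt_linear_matrix5 A \<longleftrightarrow>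
     (\<forall>i\<in>{1..5}. A i i = 0) \<and>
     (\<forall>i\<in>{1..5}. \<forall>j\<in>{1..5}. A j i = - A i j) \<and>
     (\<forall>i\<in>{1..5}. \<forall>j\<in>{1..5}. is_linear_form5 (A i j))"

text \<open>Pfaffian of the 4x4 alternating submatrix on the (increasing) indices l!0<l!1<l!2<l!3.\<close>
definition pf4 :: "(nat \<Rightarrow> nat \<Rightarrow> 'k::comm_ring_1) \<Rightarrow> nat list \<Rightarrow> 'k" where
  "pf4 A l = A (l!0) (l!1) * A (l!2) (l!3) - A (l!0) (l!2) * A (l!1) (l!3)
             + A (l!0) (l!3) * A (l!1) (l!2)"

definition pfaff_p :: "(nat \<Rightarrow> nat \<Rightarrow> 'k::comm_ring_1) \<Rightarrow> nat \<Rightarrow> 'k" where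
  "pfaff_p A i = (-1) ^ (i + 1) * pf4 A (filter (\<lambda>k. k \<noteq> i) [1..<6])"

definition pdiff :: "nat \<Rightarrow> 'k::comm_ring_1 mpoly \<Rightarrow> 'k mpoly" where
  "pdiff i p = (\<Sum>m\<in>Poly_Mapping.keys p.
      Poly_Mapping.single (m - Poly_Mapping.single i 1)
        (of_nat (Poly_Mapping.lookup m i) * Poly_Mapping.lookup p m))"

definition detn :: "nat \<Rightarrow> (nat \<Rightarrow> nat \<Rightarrow> 'a::comm_ring_1) \<Rightarrow> 'a" where
  "detn n M = (\<Sum>\<sigma> | \<sigma> permutes {1..n}. of_int (sign \<sigma>) * (\<Prod>i=1..n. M i (\<sigma> i)))"

definition S_form :: "(nat \<Rightarrow> nat \<Rightarrow> 'k::comm_ring_1 mpoly) \<Rightarrow> 'k mpoly" where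
  "S_form A = detn 5 (\<lambda>i j. pdiff j (pfaff_p A i))"

end

theory Submission
  imports Defs
begin


lemma pdiff_superset:
  assumes "finite S" "Poly_Mapping.keys p \<subseteq> S"
  shows "pdiff i p = (\<Sum>m\<in>S. Poly_Mapping.single (m - Poly_Mapping.single i 1)
        (of_nat (Poly_Mapping.lookup m i) * Poly_Mapping.lookup p m))"
  unfolding pdiff_def
  by (rule sum.mono_neutral_left) (use assms in \<open>auto simp: in_keys_iff\<close>)

lemma pdiff_add: "pdiff i (p + q) = pdiff i p + pdiff i q"
proof -
  let ?S = "Poly_Mapping.keys p \<union> Poly_Mapping.keys q"
  have f: "finite ?S" by simp
  have k: "Poly_Mapping.keys (p + q) \<subseteq> ?S" by (rule keys_add)
  show ?thesis
    using pdiff_superset[OF f k] pdiff_superset[OF f, of p] pdiff_superset[OF f, of q]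
    by (simp add: lookup_add distrib_left single_add sum.distrib)
qed

lemma pdiff_zero[simp]: "pdiff i 0 = 0"
  by (simp add: pdiff_def)

lemma pdiff_sum: "pdiff i (sum f A) = (\<Sum>x\<in>A. pdiff i (f x))"
  by (induction A rule: infinite_finite_induct) (auto simp: pdiff_add)

lemma pdiff_uminus: "pdiff i (- p) = - pdiff i p"
  using pdiff_add[of i p "-p"] by (simp add: eq_neg_iff_add_eq_0 add.commute)

lemma pdiff_diff: "pdiff i (p - q) = pdiff i p - pdiff i q"
  using pdiff_add[of i p "-q"] by (simp add: pdiff_uminus)

lemma pdiff_single: "pdiff i (Poly_Mapping.single m c) =
   Poly_Mapping.single (m - Poly_Mapping.single i 1) (of_nat (Poly_Mapping.lookup m i) * c)"
  by (subst pdiff_superset[of "{m}"]) auto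

lemma poly_sum_single: "p = (\<Sum>m\<in>Poly_Mapping.keys p. Poly_Mapping.single m (Poly_Mapping.lookup p m))"
  by (rule poly_mapping_eqI) (simp add: lookup_sum lookup_single when_def in_keys_iff sum.delta' )

lemma monom_shift:
  fixes m n :: "nat \<Rightarrow>\<^sub>0 nat"
  assumes "Poly_Mapping.lookup m i > 0"
  shows "m - Poly_Mapping.single i 1 + n = m + n - Poly_Mapping.single i 1"
  by (rule poly_mapping_eqI) (use assms in \<open>auto simp: lookup_add lookup_minus lookup_single when_def\<close>)

lemma pdiff_mult_single:
  fixes a b :: "'k::comm_ring_1"
  shows "pdiff i (Poly_Mapping.single m a * Poly_Mapping.single n b) =
    pdiff i (Poly_Mapping.single m a) * Poly_Mapping.single n b + Poly_Mapping.single m a * pdiff i (Poly_Mapping.single n b)"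
proof -
  have 1: "Poly_Mapping.single (m - Poly_Mapping.single i 1 + n) (of_nat (Poly_Mapping.lookup m i) * a * b)
     = Poly_Mapping.single (m + n - Poly_Mapping.single i 1) (of_nat (Poly_Mapping.lookup m i) * a * b)"
    by (cases "Poly_Mapping.lookup m i > 0") (simp_all only: monom_shift, simp)
  have 2: "Poly_Mapping.single (m + (n - Poly_Mapping.single i 1)) (a * (of_nat (Poly_Mapping.lookup n i) * b))
     = Poly_Mapping.single (m + n - Poly_Mapping.single i 1) (of_nat (Poly_Mapping.lookup n i) * a * b)"
    using monom_shift[of n i m] by (cases "Poly_Mapping.lookup n i > 0") (simp_all add: add.commute mult.assoc mult.left_commute)
  have L: "pdiff i (Poly_Mapping.single m a * Poly_Mapping.single n b) =
     Poly_Mapping.single (m + n - Poly_Mapping.single i 1) (of_nat (Poly_Mapping.lookup m i) * a * b)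
     + Poly_Mapping.single (m + n - Poly_Mapping.single i 1) (of_nat (Poly_Mapping.lookup n i) * a * b)"
    by (simp add: mult_single pdiff_single lookup_add single_add[symmetric] algebra_simps)
  have R: "pdiff i (Poly_Mapping.single m a) * Poly_Mapping.single n b + Poly_Mapping.single m a * pdiff i (Poly_Mapping.single n b)
    = Poly_Mapping.single (m - Poly_Mapping.single i 1 + n) (of_nat (Poly_Mapping.lookup m i) * a * b)
     + Poly_Mapping.single (m + (n - Poly_Mapping.single i 1)) (a * (of_nat (Poly_Mapping.lookup n i) * b))"
    by (simp only: mult_single pdiff_single)
  show ?thesis unfolding L R 1 2 ..
qed

lemma pdiff_mult: "pdiff i (p * q) = pdiff i p * q + p * pdiff i (q :: 'k::comm_ring_1 mpoly)"
proof -
  define P where "P = Poly_Mapping.keys p"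
  define Q where "Q = Poly_Mapping.keys q"
  have p: "p = (\<Sum>m\<in>P. Poly_Mapping.single m (Poly_Mapping.lookup p m))"
    unfolding P_def by (rule poly_sum_single)
  have q: "q = (\<Sum>m\<in>Q. Poly_Mapping.single m (Poly_Mapping.lookup q m))"
    unfolding Q_def by (rule poly_sum_single)
  have "pdiff i ((\<Sum>m\<in>P. Poly_Mapping.single m (Poly_Mapping.lookup p m)) * (\<Sum>m\<in>Q. Poly_Mapping.single m (Poly_Mapping.lookup q m)))
    = pdiff i (\<Sum>m\<in>P. Poly_Mapping.single m (Poly_Mapping.lookup p m)) * (\<Sum>m\<in>Q. Poly_Mapping.single m (Poly_Mapping.lookup q m))
     + (\<Sum>m\<in>P. Poly_Mapping.single m (Poly_Mapping.lookup p m)) * pdiff i (\<Sum>m\<in>Q. Poly_Mapping.single m (Poly_Mapping.lookup q m))"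
    by (simp add: sum_product pdiff_sum pdiff_mult_single sum.distrib)
  then show ?thesis using p q by simp
qed

lemma pdiff_Const[simp]: "pdiff i (Const c) = 0"
  by (simp add: Const_def pdiff_single)

lemma pdiff_Const_mult: "pdiff i (Const c * p) = Const c * pdiff i p"
  by (simp add: pdiff_mult)

lemma Const_add: "Const (a + b) = Const a + Const b"
  by (simp add: Const_def single_add)

lemma Const_mult: "Const (a * b) = Const a * (Const b :: 'k::comm_ring_1 mpoly)"
  by (simp add: Const_def mult_single)

lemma Const_eq_0[simp]: "Const c = 0 \<longleftrightarrow> c = 0"
  by (metis Const_def lookup_single_eq single_zero)

lemma Const_zero[simp]: "Const 0 = 0"
  by (simp add: Const_def)



lemma prod_row_split:
  fixes M :: "nat \<Rightarrow> 'b \<Rightarrow> 'a::comm_monoid_mult" and \<sigma> :: "nat \<Rightarrow> 'b" and n l :: nat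
  assumes "l \<in> {1..n}"
  shows "(\<Prod>i=1..n. (if i = l then F (\<sigma> i) else M i (\<sigma> i))) =
     F (\<sigma> l) * (\<Prod>i\<in>{1..n}-{l}. M i (\<sigma> i))"
proof -
  have "(\<Prod>i=1..n. (if i = l then F (\<sigma> i) else M i (\<sigma> i))) =
     (if l = l then F (\<sigma> l) else M l (\<sigma> l)) * (\<Prod>i\<in>{1..n}-{l}. (if i = l then F (\<sigma> i) else M i (\<sigma> i)))"
    by (rule prod.remove) (use assms in auto)
  also have "(\<Prod>i\<in>{1..n}-{l}. (if i = l then F (\<sigma> i) else M i (\<sigma> i))) = (\<Prod>i\<in>{1..n}-{l}. M i (\<sigma> i))"
    by (rule prod.cong) auto
  finally show ?thesis by simp
qed

lemma detn_row_sum: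
  fixes M :: "nat \<Rightarrow> nat \<Rightarrow> 'a::comm_ring_1"
  assumes "l \<in> {1..n}"
  shows "detn n (\<lambda>i j. if i = l then (\<Sum>k\<in>K. w k * R k j) else M i j) =
    (\<Sum>k\<in>K. w k * detn n (\<lambda>i j. if i = l then R k j else M i j))"
proof -
  have "detn n (\<lambda>i j. if i = l then (\<Sum>k\<in>K. w k * R k j) else M i j) =
     (\<Sum>\<sigma> | \<sigma> permutes {1..n}. of_int (sign \<sigma>) * ((\<Sum>k\<in>K. w k * R k (\<sigma> l)) * (\<Prod>i\<in>{1..n}-{l}. M i (\<sigma> i))))"
    unfolding detn_def by (rule sum.cong[OF refl], subst prod_row_split[OF assms], rule refl)
  also have "\<dots> = (\<Sum>\<sigma> | \<sigma> permutes {1..n}. \<Sum>k\<in>K. w k * (of_int (sign \<sigma>) * (R k (\<sigma> l) * (\<Prod>i\<in>{1..n}-{l}. M i (\<sigma> i)))))"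
    by (simp add: sum_distrib_left sum_distrib_right mult.assoc mult.left_commute)
  also have "\<dots> = (\<Sum>k\<in>K. w k * (\<Sum>\<sigma> | \<sigma> permutes {1..n}. of_int (sign \<sigma>) * (R k (\<sigma> l) * (\<Prod>i\<in>{1..n}-{l}. M i (\<sigma> i)))))"
    by (subst sum.swap) (simp add: sum_distrib_left)
  also have "\<dots> = (\<Sum>k\<in>K. w k * detn n (\<lambda>i j. if i = l then R k j else M i j))"
    unfolding detn_def by (rule sum.cong[OF refl], rule arg_cong[where f="\<lambda>x. w _ * x"], rule sum.cong[OF refl], subst prod_row_split[OF assms], simp only: mult.assoc)
  finally show ?thesis .
qed

lemma detn_zero_row:
  fixes M :: "nat \<Rightarrow> nat \<Rightarrow> 'a::comm_ring_1"
  assumes "l \<in> {1..n}" "\<forall>j\<in>{1..n}. M l j = 0"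
  shows "detn n M = 0"
proof -
  have "\<forall>\<sigma>\<in>{\<sigma>. \<sigma> permutes {1..n}}. of_int (sign \<sigma>) * (\<Prod>i=1..n. M i (\<sigma> i)) = 0"
  proof
    fix \<sigma> assume "\<sigma> \<in> {\<sigma>. \<sigma> permutes {1..n}}"
    then have s: "\<sigma> permutes {1..n}" by simp
    have "\<sigma> l \<in> {1..n}" using permutes_in_image[OF s, of l] assms(1) by simp
    then have "M l (\<sigma> l) = 0" using assms(2) by simp
    then have "(\<Prod>i=1..n. M i (\<sigma> i)) = 0"
      using assms(1) by (intro prod_zero) auto
    then show "of_int (sign \<sigma>) * (\<Prod>i=1..n. M i (\<sigma> i)) = 0" by simp
  qed
  then show ?thesis unfolding detn_def by (rule sum.neutral)
qed

lemma detn_identical_rows: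
  fixes M :: "nat \<Rightarrow> nat \<Rightarrow> 'a::idom"
  assumes two: "(2::'a) \<noteq> 0" and ab: "a \<in> {1..n}" "b \<in> {1..n}" "a \<noteq> b"
    and eq: "\<forall>j. M a j = M b j"
  shows "detn n M = 0"
proof -
  define S where "S = {1..n}"
  define t where "t = Transposition.transpose a b"
  have tS: "t permutes S" unfolding t_def S_def using ab by (intro permutes_swap_id) auto
  have tt: "t \<circ> t = id" unfolding t_def by simp
  have rows: "M (t i) = M i" for i
    unfolding t_def using eq by (cases "i = a"; cases "i = b") (auto simp: fun_eq_iff)
  have "detn n M = (\<Sum>\<sigma> | \<sigma> permutes S. of_int (sign (\<sigma> \<circ> t)) * (\<Prod>i\<in>S. M i ((\<sigma> \<circ> t) i)))"
    unfolding detn_def S_def[symmetric]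
  proof (rule sum.reindex_bij_witness[of _ "\<lambda>\<sigma>. \<sigma> \<circ> t" "\<lambda>\<sigma>. \<sigma> \<circ> t"])
    show "\<sigma> \<circ> t \<circ> t = \<sigma>" for \<sigma> by (simp add: o_assoc[symmetric] tt)
    show "\<sigma> \<circ> t \<in> {\<sigma>. \<sigma> permutes S}" if "\<sigma> \<in> {\<sigma>. \<sigma> permutes S}" for \<sigma>
      using that tS by (auto intro: permutes_compose)
    show "\<sigma> \<circ> t \<circ> t = \<sigma>" for \<sigma> by (simp add: o_assoc[symmetric] tt)
    show "\<sigma> \<circ> t \<in> {\<sigma>. \<sigma> permutes S}" if "\<sigma> \<in> {\<sigma>. \<sigma> permutes S}" for \<sigma>
      using that tS by (auto intro: permutes_compose)
    show "of_int (sign (\<sigma> \<circ> t \<circ> t)) * (\<Prod>i\<in>S. M i ((\<sigma> \<circ> t \<circ> t) i)) = of_int (sign \<sigma>) * (\<Prod>i\<in>S. M i (\<sigma> i))" for \<sigma>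
      by (simp add: o_assoc[symmetric] tt)
  qed
  also have "\<dots> = (\<Sum>\<sigma> | \<sigma> permutes S. - (of_int (sign \<sigma>) * (\<Prod>i\<in>S. M i (\<sigma> i))))"
  proof (rule sum.cong, simp)
    fix \<sigma> assume "\<sigma> \<in> {\<sigma>. \<sigma> permutes S}"
    then have s: "\<sigma> permutes S" by simp
    have fin: "finite S" unfolding S_def by simp
    have "sign (\<sigma> \<circ> t) = sign \<sigma> * sign t"
      by (rule sign_compose) (use s tS fin in \<open>auto intro: permutation_permutes[THEN iffD2]\<close>)
    also have "sign t = -1" unfolding t_def using ab by (simp add: sign_swap_id)
    finally have sg: "sign (\<sigma> \<circ> t) = - sign \<sigma>" by (simp only: mult_minus1_right)
    have "(\<Prod>i\<in>S. M i ((\<sigma> \<circ> t) i)) = (\<Prod>i\<in>S. M (t i) (\<sigma> (t i)))"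
      by (simp add: rows)
    also have "\<dots> = (\<Prod>i\<in>S. M i (\<sigma> i))"
      using prod.permute[OF tS, of "\<lambda>i. M i (\<sigma> i)"] by (simp add: o_def)
    finally show "of_int (sign (\<sigma> \<circ> t)) * (\<Prod>i\<in>S. M i ((\<sigma> \<circ> t) i)) = - (of_int (sign \<sigma>) * (\<Prod>i\<in>S. M i (\<sigma> i)))"
      by (simp add: sg)
  qed
  also have "\<dots> = - detn n M" unfolding detn_def S_def by (simp add: sum_negf)
  finally have "2 * detn n M = 0" by simp
  with two show ?thesis by simp
qed

lemma detn_dependent_rows:
  fixes M :: "nat \<Rightarrow> nat \<Rightarrow> 'a::idom"
  assumes two: "(2::'a) \<noteq> 0" and l: "l \<in> {1..n}" and wl: "w l \<noteq> 0"
    and dep: "\<forall>j\<in>{1..n}. (\<Sum>k\<in>{1..n}. w k * M k j) = 0"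
  shows "detn n M = 0"
proof -
  have "0 = detn n (\<lambda>i j. if i = l then (\<Sum>k\<in>{1..n}. w k * M k j) else M i j)"
    by (rule detn_zero_row[OF l, symmetric]) (use dep in simp)
  also have "\<dots> = (\<Sum>k\<in>{1..n}. w k * detn n (\<lambda>i j. if i = l then M k j else M i j))"
    by (rule detn_row_sum[OF l])
  also have "\<dots> = w l * detn n (\<lambda>i j. if i = l then M l j else M i j)
      + (\<Sum>k\<in>{1..n}-{l}. w k * detn n (\<lambda>i j. if i = l then M k j else M i j))"
    by (rule sum.remove) (use l in auto)
  also have "(\<Sum>k\<in>{1..n}-{l}. w k * detn n (\<lambda>i j. if i = l then M k j else M i j)) = 0"
  proof (rule sum.neutral, intro ballI)
    fix k assume "k \<in> {1..n}-{l}"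
    then have k: "k \<in> {1..n}" "k \<noteq> l" by auto
    have "detn n (\<lambda>i j. if i = l then M k j else M i j) = 0"
      by (rule detn_identical_rows[OF two l k(1)]) (use k in auto)
    then show "w k * detn n (\<lambda>i j. if i = l then M k j else M i j) = 0" by simp
  qed
  also have "(\<lambda>i j. if i = l then M l j else M i j) = M" by (auto simp: fun_eq_iff)
  finally show ?thesis using wl by simp
qed



lemma two_ne_zero_char:
  assumes "CHAR('k::field) \<noteq> 2"
  shows "(2::'k) \<noteq> 0"
proof
  assume "(2::'k) = 0"
  then have "of_nat 2 = (0::'k)" by simp
  then have d: "CHAR('k) dvd 2" by (simp only: of_nat_eq_0_iff_char_dvd)
  then have "CHAR('k) \<le> 2" by (rule dvd_imp_le) simp
  moreover have "CHAR('k) \<noteq> 0" using d by (metis dvd_0_left_iff zero_neq_numeral)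
  moreover have "CHAR('k) \<noteq> 1" using CHAR_not_1 by simp
  ultimately show False using assms by linarith
qed

theorem lemma8p3:
  fixes \<phi> :: "nat \<Rightarrow> nat \<Rightarrow> 'k::field mpoly"
  assumes "CHAR('k) \<noteq> 2" and "CHAR('k) \<noteq> 3" and "CHAR('k) \<noteq> 5"
    and "alt_linear_matrix5 \<phi>"
    and "S_form \<phi> \<noteq> 0"
  shows "\<forall>a :: nat \<Rightarrow> nat \<Rightarrow> 'k.
           (\<Sum>i=1..5. \<Sum>j=i..5. Const (a i j) * (pfaff_p \<phi> i * pfaff_p \<phi> j)) = 0
           \<longrightarrow> (\<forall>i j. 1 \<le> i \<and> i \<le> j \<and> j \<le> 5 \<longrightarrow> a i j = 0)"
proof (intro allI impI)
  fix a :: "nat \<Rightarrow> nat \<Rightarrow> 'k" and i0 j0 :: nat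
  assume H: "(\<Sum>i=1..5. \<Sum>j=i..5. Const (a i j) * (pfaff_p \<phi> i * pfaff_p \<phi> j)) = 0"
    and ij: "1 \<le> i0 \<and> i0 \<le> j0 \<and> j0 \<le> 5"
  show "a i0 j0 = 0"
  proof (rule ccontr)
    assume a0: "a i0 j0 \<noteq> 0"
    define I where "I = {1..5::nat}"
    define P where "P i = pfaff_p \<phi> i" for i
    define J where "J l j = pdiff j (P l)" for l j
    define c where "c i k = (if i \<le> k then a i k else 0)" for i k
    define v where "v l = (\<Sum>m\<in>I. Const (c l m + c m l) * P m)" for l
    have two: "(2::'k) \<noteq> 0" by (rule two_ne_zero_char[OF assms(1)])
    have two': "(2::'k mpoly) \<noteq> 0"
    proof -
      have "(2::'k mpoly) = Const 2" by (simp add: Const_def)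
      then show ?thesis using two Const_eq_0 by metis
    qed
    have Q: "(\<Sum>i\<in>I. \<Sum>k\<in>I. Const (c i k) * (P i * P k)) = 0"
    proof -
      have "(\<Sum>k\<in>I. Const (c i k) * (P i * P k)) = (\<Sum>k=i..5. Const (a i k) * (P i * P k))"
        if "i \<in> I" for i
      proof -
        have "(\<Sum>k\<in>I. Const (c i k) * (P i * P k)) =
              (\<Sum>k\<in>I. if i \<le> k then Const (a i k) * (P i * P k) else 0)"
          by (rule sum.cong) (auto simp: c_def)
        also have "\<dots> = (\<Sum>k\<in>{k\<in>I. i \<le> k}. Const (a i k) * (P i * P k))"
          by (rule sum.inter_filter[symmetric]) (simp add: I_def)
        also have "{k\<in>I. i \<le> k} = {i..5}" using that by (auto simp: I_def)
        finally show ?thesis .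
      qed
      then have "(\<Sum>i\<in>I. \<Sum>k\<in>I. Const (c i k) * (P i * P k)) = (\<Sum>i\<in>I. \<Sum>k=i..5. Const (a i k) * (P i * P k))"
        by (rule sum.cong[OF refl])
      then show ?thesis using H by (simp add: I_def P_def)
    qed
    have D: "(\<Sum>l\<in>I. v l * J l j) = 0" for j
    proof -
      have "pdiff j (\<Sum>i\<in>I. \<Sum>k\<in>I. Const (c i k) * (P i * P k)) =
         (\<Sum>i\<in>I. \<Sum>k\<in>I. Const (c i k) * (J i j * P k)) + (\<Sum>i\<in>I. \<Sum>k\<in>I. Const (c i k) * (P i * J k j))"
        by (simp add: pdiff_sum pdiff_Const_mult pdiff_mult distrib_left sum.distrib J_def)
      also have "(\<Sum>i\<in>I. \<Sum>k\<in>I. Const (c i k) * (P i * J k j)) = (\<Sum>k\<in>I. \<Sum>i\<in>I. Const (c i k) * (P i * J k j))"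
        by (rule sum.swap)
      also have "(\<Sum>i\<in>I. \<Sum>k\<in>I. Const (c i k) * (J i j * P k)) + (\<Sum>k\<in>I. \<Sum>i\<in>I. Const (c i k) * (P i * J k j))
         = (\<Sum>l\<in>I. v l * J l j)"
      proof -
        have "(\<Sum>l\<in>I. v l * J l j) = (\<Sum>l\<in>I. \<Sum>m\<in>I. Const (c l m) * (J l j * P m) + Const (c m l) * (P m * J l j))"
          unfolding v_def sum_distrib_right by (rule sum.cong[OF refl], rule sum.cong[OF refl]) (simp add: Const_add algebra_simps)
        also have "\<dots> = (\<Sum>l\<in>I. \<Sum>m\<in>I. Const (c l m) * (J l j * P m)) + (\<Sum>l\<in>I. \<Sum>m\<in>I. Const (c m l) * (P m * J l j))"
          by (simp add: sum.distrib)
        finally show ?thesis by simp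
      qed
      finally show ?thesis using Q by simp
    qed
    have "S_form \<phi> = detn 5 J" unfolding S_form_def J_def P_def ..
    also have "detn 5 J = 0"
    proof (cases "\<exists>l\<in>I. v l \<noteq> 0")
      case True
      then obtain l where l: "l \<in> I" "v l \<noteq> 0" by blast
      show ?thesis
        by (rule detn_dependent_rows[OF two', of l 5 v J]) (use l D in \<open>simp_all add: I_def\<close>)
    next
      case False
      then have v0: "v i0 = 0" using ij by (auto simp: I_def)
      define w where "w m = Const (c i0 m + c m i0)" for m
      have "(\<Sum>m\<in>I. w m * J m j) = 0" for j
      proof -
        have "pdiff j (v i0) = (\<Sum>m\<in>I. w m * J m j)"
          by (simp add: v_def w_def pdiff_sum pdiff_Const_mult J_def)
        then show ?thesis using v0 by simp
      qed
      moreover have "w j0 \<noteq> 0"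
      proof (cases "i0 = j0")
        case True
        then have "c i0 j0 + c j0 i0 = 2 * a i0 j0" by (simp add: c_def)
        then show ?thesis using two a0 by (simp add: w_def)
      next
        case False
        then have "c i0 j0 + c j0 i0 = a i0 j0" using ij by (simp add: c_def)
        then show ?thesis using a0 by (simp add: w_def)
      qed
      moreover have "j0 \<in> {1..5}" using ij by simp
      ultimately show ?thesis
        using detn_dependent_rows[OF two', of j0 5 w J] by (simp add: I_def)
    qed
    finally show False using assms(5) by simp
  qed
qed

end
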